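(* Suppose that $(R,\mathfrak m)$ is $F$-pure and let $\mathfrak a$ be a fully $\Phi(E)$-special ideal of $R$. Then $\mathfrak a$ is radical and every associated prime of $\mathfrak a$ is fully $\Phi(E)$-special.
   Context: $(R,\mathfrak m)$ is a commutative Noetherian local ring of prime characteristic $p$. $R$ is $F$-pure if for every $R$-module $M$ the map $M\to R^{(1)}\otimes_RM$, $m\mapsto1\otimes m$, is injective ($R^{(1)}$ = $R$ with right structure via $r\mapsto r^p$). The Frobenius skew polynomial ring $R[x,f]$ consists of polynomials $\sum r_ix^i$, free left $R$-module on $(x^i)_{i\ge0}$, with $xr=r^px$. $E=E_R(R/\mathfrak m)$; $\Phi(E)=R[x,f]\otimes_RE=\bigoplus_nRx^n\otimes_RE$, with $0$th component identified with $E$. $\operatorname{ann}_{\Phi(E)}(\mathfrak aR[x,f])$ is the submodule of elements annihilated by all $rx^n$, $r\in\mathfrak a$, $n\ge0$; $\mathfrak a$ is fully $\Phi(E)$-special if $(0:_E\mathfrak a)$ is contained in the $0$th component of $\operatorname{ann}_{\Phi(E)}(\mathfrak aR[x,f])$. *)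

theory Defs
  imports "HOL-Computational_Algebra.Primes" "HOL.Modules" "HOL-Library.Function_Algebras"
begin

text \<open>Commutative ring theory for a ring given as a type of class comm_ring_1
  (the whole type is the ring R).\<close>

definition ideal :: "'a::comm_ring_1 set \<Rightarrow> bool" where
  "ideal I \<longleftrightarrow> 0 \<in> I \<and> (\<forall>x\<in>I. \<forall>y\<in>I. x + y \<in> I) \<and> (\<forall>r x. x \<in> I \<longrightarrow> r * x \<in> I)"

definition maximal_ideal :: "'a::comm_ring_1 set \<Rightarrow> bool" where
  "maximal_ideal M \<longleftrightarrow> ideal M \<and> M \<noteq> UNIV \<and>
     (\<forall>J. ideal J \<and> M \<subseteq> J \<longrightarrow> J = M \<or> J = UNIV)"

definition local_ring :: "'a::comm_ring_1 set \<Rightarrow> bool" where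
  "local_ring m \<longleftrightarrow> maximal_ideal m \<and> (\<forall>J. maximal_ideal J \<longrightarrow> J = m)"

definition noetherian_ring :: "'a::comm_ring_1 itself \<Rightarrow> bool" where
  "noetherian_ring _ \<longleftrightarrow> (\<forall>I::'a set. ideal I \<longrightarrow>
     (\<exists>S. finite S \<and> S \<subseteq> I \<and> I = {y. \<exists>c. y = (\<Sum>s\<in>S. c s * s)}))"

definition prime_ideal :: "'a::comm_ring_1 set \<Rightarrow> bool" where
  "prime_ideal P \<longleftrightarrow> ideal P \<and> P \<noteq> UNIV \<and> (\<forall>x y. x * y \<in> P \<longrightarrow> x \<in> P \<or> y \<in> P)"

definition radical_ideal :: "'a::comm_ring_1 set \<Rightarrow> bool" where
  "radical_ideal a \<longleftrightarrow> {x. \<exists>n::nat. x ^ n \<in> a} = a"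

text \<open>Associated primes of the ideal a, i.e. Ass_R(R/a): primes of the form (a : x).\<close>
definition associated_primes :: "'a::comm_ring_1 set \<Rightarrow> 'a set set" where
  "associated_primes a = {P. prime_ideal P \<and> (\<exists>x. P = {r. r * x \<in> a})}"

text \<open>Injective module (Baer's criterion form) and the injective hull E = E_R(R/m):
  an injective module containing an essential submodule R e0 with ann(e0) = m,
  i.e. an essential copy of R/m.\<close>
definition injective_module :: "('a::comm_ring_1 \<Rightarrow> 'e::ab_group_add \<Rightarrow> 'e) \<Rightarrow> bool" where
  "injective_module sc \<longleftrightarrow> module sc \<and>
     (\<forall>I (g::'a \<Rightarrow> 'e). ideal I \<and> (\<forall>x\<in>I. \<forall>y\<in>I. g (x + y) = g x + g y) \<and>
        (\<forall>r. \<forall>x\<in>I. g (r * x) = sc r (g x)) \<longrightarrow> (\<exists>e. \<forall>x\<in>I. g x = sc x e))"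

definition injective_hull_residue :: "'a::comm_ring_1 set \<Rightarrow> ('a \<Rightarrow> 'e::ab_group_add \<Rightarrow> 'e) \<Rightarrow> bool" where
  "injective_hull_residue m sc \<longleftrightarrow> injective_module sc \<and>
     (\<exists>e0. e0 \<noteq> 0 \<and> {r. sc r e0 = 0} = m \<and>
        (\<forall>N. module.subspace sc N \<and> N \<noteq> {0} \<longrightarrow> (\<exists>y\<in>N. y \<noteq> 0 \<and> (\<exists>r. y = sc r e0))))"

text \<open>Tensor products  R^(q) \<otimes>_R M, where R^(q) is R with left structure the usual one and
  right structure via r \<mapsto> r^q.  Elements are formal Z-linear combinations of pairs
  (s, m) with m \<in> M (finitely supported functions), modulo the subgroup tensor_rel
  generated by the bilinearity and balancing relations.  Two formal sums represent the
  same element of the tensor product iff their difference lies in tensor_rel.\<close>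
definition fdelta :: "'x \<Rightarrow> 'x \<Rightarrow> int" where
  "fdelta x = (\<lambda>y. if y = x then 1 else 0)"

inductive_set tensor_rel :: "nat \<Rightarrow> ('a::comm_ring_1 \<Rightarrow> 'e::ab_group_add \<Rightarrow> 'e) \<Rightarrow> 'e set
    \<Rightarrow> ('a \<times> 'e \<Rightarrow> int) set"
  for q :: nat and sc :: "'a \<Rightarrow> 'e \<Rightarrow> 'e" and M :: "'e set" where
  zero: "0 \<in> tensor_rel q sc M"
| add: "f \<in> tensor_rel q sc M \<Longrightarrow> g \<in> tensor_rel q sc M \<Longrightarrow> f + g \<in> tensor_rel q sc M"
| neg: "f \<in> tensor_rel q sc M \<Longrightarrow> - f \<in> tensor_rel q sc M"
| ladd: "m \<in> M \<Longrightarrow>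
     fdelta (s + s', m) - fdelta (s, m) - fdelta (s', m) \<in> tensor_rel q sc M"
| radd: "m \<in> M \<Longrightarrow> m' \<in> M \<Longrightarrow>
     fdelta (s, m + m') - fdelta (s, m) - fdelta (s, m') \<in> tensor_rel q sc M"
| bal: "m \<in> M \<Longrightarrow> fdelta (s * r ^ q, m) - fdelta (s, sc r m) \<in> tensor_rel q sc M"

text \<open>F-purity: for every R-module M the map M \<rightarrow> R^(1) \<otimes>_R M, m \<mapsto> 1 \<otimes> m, is injective.
  (R^(1) has right structure via r \<mapsto> r^p.)  Modules are taken with carriers in the
  type 'e (any module structure on 'e and any submodule of it).\<close>
definition F_pure :: "nat \<Rightarrow> 'a::comm_ring_1 itself \<Rightarrow> 'e::ab_group_add itself \<Rightarrow> bool" where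
  "F_pure p _ _ \<longleftrightarrow> (\<forall>(sc :: 'a \<Rightarrow> 'e \<Rightarrow> 'e). module sc \<longrightarrow>
     (\<forall>M. module.subspace sc M \<longrightarrow>
        (\<forall>x\<in>M. \<forall>y\<in>M. fdelta (1, x) - fdelta (1, y) \<in> tensor_rel p sc M \<longrightarrow> x = y)))"

text \<open>Phi(E) = \<Oplus>_n R x^n \<otimes>_R E; the bimodule R x^n is identified with
  R^(p^n) via s x^n \<mapsto> s (since x^n r = r^(p^n) x^n).  An element e of the 0th component
  (e = 1 \<otimes> e) is annihilated by r x^n iff r x^n \<otimes> e = 0 in R x^n \<otimes> E, i.e. iff
  r \<otimes> e = 0 in R^(p^n) \<otimes>_R E.\<close>
definition fully_PhiE_special :: "nat \<Rightarrow> ('a::comm_ring_1 \<Rightarrow> 'e::ab_group_add \<Rightarrow> 'e) \<Rightarrow> 'a set \<Rightarrow> bool" where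
  "fully_PhiE_special p sE a \<longleftrightarrow>
     (\<forall>e. (\<forall>r\<in>a. sE r e = 0) \<longrightarrow>
        (\<forall>n::nat. \<forall>r\<in>a. fdelta (r, e) \<in> tensor_rel (p ^ n) sE UNIV))"

end

theory Submission
  imports Defs
begin

lemma ideal_one_UNIV:
  assumes "ideal I" "(1::'a::comm_ring_1) \<in> I" shows "I = UNIV"
proof -
  have "r \<in> I" for r::'a using assms unfolding ideal_def by (metis mult.right_neutral)
  thus ?thesis by auto
qed

lemma ideal_mult_right:
  assumes "ideal I" "x \<in> I" shows "x * (r::'a::comm_ring_1) \<in> I"
  using assms unfolding ideal_def by (metis mult.commute)

lemma ideal_diff:
  assumes "ideal I" "x \<in> I" "y \<in> I" shows "x - (y::'a::comm_ring_1) \<in> I"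
proof -
  have "(-1) * y \<in> I" using assms unfolding ideal_def by blast
  hence "x + (-1) * y \<in> I" using assms unfolding ideal_def by blast
  thus ?thesis by simp
qed

lemma exists_maximal:
  assumes "ideal J" "(1::'a::comm_ring_1) \<notin> J"
  shows "\<exists>M. maximal_ideal M \<and> J \<subseteq> M"
proof -
  let ?A = "{I::'a set. ideal I \<and> J \<subseteq> I \<and> 1 \<notin> I}"
  have "\<exists>M\<in>?A. \<forall>X\<in>?A. M \<subseteq> X \<longrightarrow> X = M"
  proof (rule subset_Zorn_nonempty)
    show "?A \<noteq> {}" using assms by blast
  next
    fix C assume ne: "C \<noteq> {}" and ch: "subset.chain ?A C"
    have CA: "C \<subseteq> ?A" using ch unfolding subset.chain_def by blast
    have cmp: "\<forall>X\<in>C. \<forall>Y\<in>C. X \<subseteq> Y \<or> Y \<subseteq> X" using ch unfolding subset.chain_def by blast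
    have "ideal (\<Union>C)" unfolding ideal_def
    proof (intro conjI ballI allI impI)
      show "0 \<in> \<Union>C" using ne CA unfolding ideal_def by blast
    next
      fix x y assume "x \<in> \<Union>C" "y \<in> \<Union>C"
      then obtain X Y where XY: "X \<in> C" "Y \<in> C" "x \<in> X" "y \<in> Y" by blast
      show "x + y \<in> \<Union>C"
      proof (cases "X \<subseteq> Y")
        case True thus ?thesis using XY CA unfolding ideal_def by blast
      next
        case False hence "Y \<subseteq> X" using cmp XY by blast
        thus ?thesis using XY CA unfolding ideal_def by blast
      qed
    next
      fix r x assume "x \<in> \<Union>C"
      thus "r * x \<in> \<Union>C" using CA unfolding ideal_def by blast
    qed
    moreover have "J \<subseteq> \<Union>C" using ne CA by blast
    moreover have "1 \<notin> \<Union>C" using CA by blast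
    ultimately show "\<Union>C \<in> ?A" by blast
  qed
  then obtain M where M: "M \<in> ?A" "\<forall>X\<in>?A. M \<subseteq> X \<longrightarrow> X = M" by blast
  have "maximal_ideal M" unfolding maximal_ideal_def
  proof (intro conjI allI impI)
    show "ideal M" using M by blast
    show "M \<noteq> UNIV" using M by blast
  next
    fix K assume K: "ideal K \<and> M \<subseteq> K"
    show "K = M \<or> K = UNIV"
    proof (cases "1 \<in> K")
      case True thus ?thesis using K ideal_one_UNIV by blast
    next
      case False thus ?thesis using K M by blast
    qed
  qed
  thus ?thesis using M by blast
qed

lemma extend_lemma:
  fixes sE :: "'a::comm_ring_1 \<Rightarrow> 'e::ab_group_add \<Rightarrow> 'e"
  assumes inj: "injective_module sE" and a: "ideal a"
    and ann: "\<And>t. t * y \<in> a \<Longrightarrow> sE t e = 0"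
  shows "\<exists>e'. sE y e' = e \<and> (\<forall>u\<in>a. sE u e' = 0)"
proof -
  have md: "module sE" using inj unfolding injective_module_def by blast
  define I where "I = {z. \<exists>t. \<exists>u\<in>a. z = t * y + u}"
  define g where "g z = sE (SOME t. \<exists>u\<in>a. z = t * y + u) e" for z
  have gval: "g z = sE t e" if "u \<in> a" "z = t * y + u" for z t u
  proof -
    have ex: "\<exists>t u. u \<in> a \<and> z = t * y + u" using that by blast
    obtain t' where t': "\<exists>u\<in>a. z = t' * y + u" "g z = sE t' e"
      unfolding g_def by (metis (mono_tags, lifting) ex someI_ex)
    then obtain u' where u': "u' \<in> a" "z = t' * y + u'" by blast
    have "(t' - t) * y = u - u'" using u' that by (simp add: algebra_simps)
    hence "(t' - t) * y \<in> a" using ideal_diff[OF a that(1) u'(1)] by simp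
    hence "sE (t' - t) e = 0" using ann by blast
    hence "sE t' e = sE t e" using module.scale_left_diff_distrib[OF md] by (metis eq_iff_diff_eq_0)
    thus ?thesis using t' by simp
  qed
  have "ideal I" unfolding ideal_def I_def
  proof (intro conjI ballI allI impI)
    show "0 \<in> {z. \<exists>t. \<exists>u\<in>a. z = t * y + u}" using a unfolding ideal_def by (intro CollectI exI[of _ 0] bexI[of _ 0]) auto
  next
    fix x z assume "x \<in> {z. \<exists>t. \<exists>u\<in>a. z = t * y + u}" "z \<in> {z. \<exists>t. \<exists>u\<in>a. z = t * y + u}"
    then obtain t1 u1 t2 u2 where "u1 \<in> a" "u2 \<in> a" "x = t1*y+u1" "z = t2*y+u2" by blast
    moreover hence "u1 + u2 \<in> a" using a unfolding ideal_def by blast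
    ultimately show "x + z \<in> {z. \<exists>t. \<exists>u\<in>a. z = t * y + u}"
      by (intro CollectI exI[of _ "t1+t2"] bexI[of _ "u1+u2"]) (auto simp: algebra_simps)
  next
    fix r x assume "x \<in> {z. \<exists>t. \<exists>u\<in>a. z = t * y + u}"
    then obtain t u where "u \<in> a" "x = t*y+u" by blast
    moreover hence "r * u \<in> a" using a unfolding ideal_def by blast
    ultimately show "r * x \<in> {z. \<exists>t. \<exists>u\<in>a. z = t * y + u}"
      by (intro CollectI exI[of _ "r*t"] bexI[of _ "r*u"]) (auto simp: algebra_simps)
  qed
  moreover have "\<forall>x\<in>I. \<forall>z\<in>I. g (x + z) = g x + g z"
  proof (intro ballI)
    fix x z assume "x \<in> I" "z \<in> I"
    then obtain t1 u1 t2 u2 where h: "u1 \<in> a" "u2 \<in> a" "x = t1*y+u1" "z = t2*y+u2"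
      unfolding I_def by blast
    moreover hence "u1 + u2 \<in> a" using a unfolding ideal_def by blast
    moreover have "x + z = (t1+t2)*y + (u1+u2)" using h by (simp add: algebra_simps)
    ultimately show "g (x + z) = g x + g z"
      using gval module.scale_left_distrib[OF md] by metis
  qed
  moreover have "\<forall>r. \<forall>x\<in>I. g (r * x) = sE r (g x)"
  proof (intro allI ballI)
    fix r x assume "x \<in> I"
    then obtain t u where h: "u \<in> a" "x = t*y+u" unfolding I_def by blast
    moreover hence "r * u \<in> a" using a unfolding ideal_def by blast
    moreover have "r * x = (r*t)*y + r*u" using h by (simp add: algebra_simps)
    ultimately show "g (r * x) = sE r (g x)"
      using gval module.scale_scale[OF md] by metis
  qed
  ultimately obtain e' where e': "\<forall>x\<in>I. g x = sE x e'"
    using inj unfolding injective_module_def by blast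
  have "y \<in> I" unfolding I_def using a unfolding ideal_def by (intro CollectI exI[of _ 1] bexI[of _ 0]) auto
  hence "sE y e' = g y" using e' by simp
  also have "\<dots> = sE 1 e" using gval[of 0 y 1] a unfolding ideal_def by simp
  also have "\<dots> = e" using md by (simp add: module_def)
  finally have 1: "sE y e' = e" .
  have "\<forall>u\<in>a. sE u e' = 0"
  proof
    fix u assume u: "u \<in> a"
    hence "u \<in> I" unfolding I_def by (intro CollectI exI[of _ 0] bexI[of _ u]) auto
    hence "sE u e' = g u" using e' by simp
    also have "\<dots> = sE 0 e" using gval[of u u 0] u by simp
    also have "\<dots> = 0" using module.scale_zero_left[OF md] by simp
    finally show "sE u e' = 0" .
  qed
  thus ?thesis using 1 by blast
qed


theorem lemma1p8:
  fixes p :: nat and m :: "'a::comm_ring_1 set"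
    and sE :: "'a \<Rightarrow> 'e::ab_group_add \<Rightarrow> 'e" and a :: "'a set"
  assumes "prime p" and "CHAR('a) = p"
    and "noetherian_ring TYPE('a)" and "local_ring m"
    and "injective_hull_residue m sE"
    and "F_pure p TYPE('a) TYPE('e)"
    and "ideal a" and "fully_PhiE_special p sE a"
  shows "radical_ideal a \<and> (\<forall>P \<in> associated_primes a. fully_PhiE_special p sE P)"
proof -
  note a = assms(7)
  have inj: "injective_module sE" using assms(5) unfolding injective_hull_residue_def by blast
  have md: "module sE" using inj unfolding injective_module_def by blast
  obtain e0 where e0: "e0 \<noteq> 0" "{r. sE r e0 = 0} = m"
    using assms(5) unfolding injective_hull_residue_def by blast
  have loc: "maximal_ideal J \<Longrightarrow> J = m" for J using assms(4) unfolding local_ring_def by blast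
  have fs: "\<And>e n r. (\<forall>r\<in>a. sE r e = 0) \<Longrightarrow> r \<in> a \<Longrightarrow> fdelta (r, e) \<in> tensor_rel (p ^ n) sE UNIV"
    using assms(8) unfolding fully_PhiE_special_def by blast
  have fp: "\<And>x y. fdelta (1, x) - fdelta (1, y) \<in> tensor_rel p sE UNIV \<Longrightarrow> x = y"
    using assms(6) md module.subspace_UNIV[OF md] unfolding F_pure_def by blast
  have p1: "p \<ge> 1" using assms(1) prime_gt_0_nat by (simp add: Suc_leI)
  have p2: "p \<ge> 2" using assms(1) prime_ge_2_nat by blast
  have key: "x \<in> a" if xp: "x ^ p \<in> a" for x
  proof (rule ccontr)
    assume xa: "x \<notin> a"
    define J where "J = {t. t * x \<in> a}"
    have "ideal J" unfolding J_def ideal_def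
    proof (intro conjI ballI allI impI)
      show "0 \<in> {t. t * x \<in> a}" using a unfolding ideal_def by simp
    next
      fix u v assume "u \<in> {t. t * x \<in> a}" "v \<in> {t. t * x \<in> a}"
      thus "u + v \<in> {t. t * x \<in> a}" using a unfolding ideal_def by (simp add: distrib_right)
    next
      fix r u assume "u \<in> {t. t * x \<in> a}"
      thus "r * u \<in> {t. t * x \<in> a}" using a unfolding ideal_def by (simp add: mult.assoc)
    qed
    moreover have "1 \<notin> J" using xa unfolding J_def by simp
    ultimately obtain M where "maximal_ideal M" "J \<subseteq> M" using exists_maximal by blast
    hence Jm: "J \<subseteq> m" using loc by blast
    have "\<And>t. t * x \<in> a \<Longrightarrow> sE t e0 = 0" using Jm e0(2) unfolding J_def by blast
    then obtain e' where e': "sE x e' = e0" "\<forall>u\<in>a. sE u e' = 0"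
      using extend_lemma[OF inj a] by blast
    have r1: "fdelta (x ^ p, e') \<in> tensor_rel p sE UNIV"
      using fs[where e=e' and n="Suc 0" and r="x ^ p"] e'(2) xp by simp
    have r2: "fdelta (1 * x ^ p, e') - fdelta (1, sE x e') \<in> tensor_rel p sE UNIV"
      by (rule tensor_rel.bal) simp
    have "fdelta (x ^ p, e') - (fdelta (1 * x ^ p, e') - fdelta (1, sE x e')) \<in> tensor_rel p sE UNIV"
      using tensor_rel.add[OF r1 tensor_rel.neg[OF r2]] by simp
    hence r3: "fdelta (1, e0) \<in> tensor_rel p sE UNIV" using e'(1) by simp
    have "fdelta (1, 0 + 0) - fdelta (1, 0) - fdelta (1, 0) \<in> tensor_rel p sE UNIV"
      by (rule tensor_rel.radd) simp_all
    hence "- fdelta (1, 0) \<in> tensor_rel p sE UNIV" by simp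
    hence "fdelta (1, e0) + - fdelta (1, 0) \<in> tensor_rel p sE UNIV"
      using tensor_rel.add[OF r3] by blast
    hence "fdelta (1, e0) - fdelta (1, 0) \<in> tensor_rel p sE UNIV" by simp
    hence "e0 = 0" using fp by blast
    thus False using e0 by blast
  qed
  have iter: "\<forall>x. x ^ (p ^ k) \<in> a \<longrightarrow> x \<in> a" for k
  proof (induction k)
    case 0 thus ?case by simp
  next
    case (Suc k)
    show ?case
    proof (intro allI impI)
      fix x assume "x ^ (p ^ Suc k) \<in> a"
      hence "(x ^ p) ^ (p ^ k) \<in> a" by (simp add: power_mult[symmetric] mult.commute)
      hence "x ^ p \<in> a" using Suc by blast
      thus "x \<in> a" using key by blast
    qed
  qed
  have rad: "radical_ideal a" unfolding radical_ideal_def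
  proof
    show "a \<subseteq> {x. \<exists>n. x ^ n \<in> a}" by (auto intro: exI[of _ 1])
    show "{x. \<exists>n. x ^ n \<in> a} \<subseteq> a"
    proof
      fix x assume "x \<in> {x. \<exists>n. x ^ n \<in> a}"
      then obtain n where n: "x ^ n \<in> a" by blast
      have "n < 2 ^ n" by (rule less_exp)
      moreover have "(2::nat) ^ n \<le> p ^ n" using p2 by (rule power_mono) simp
      ultimately have "n \<le> p ^ n" by linarith
      hence "x ^ (p ^ n) = x ^ (p ^ n - n) * x ^ n" by (simp add: power_add[symmetric])
      hence "x ^ (p ^ n) \<in> a" using n a unfolding ideal_def by simp
      thus "x \<in> a" using iter by blast
    qed
  qed
  have ass: "fully_PhiE_special p sE P" if P: "P \<in> associated_primes a" for P
  proof -
    obtain y where y: "P = {r. r * y \<in> a}" using P unfolding associated_primes_def by blast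
    show ?thesis unfolding fully_PhiE_special_def
    proof (intro allI impI ballI)
      fix e n r assume eP: "\<forall>r\<in>P. sE r e = 0" and r: "r \<in> P"
      have "\<And>t. t * y \<in> a \<Longrightarrow> sE t e = 0" using eP y by blast
      then obtain e' where e': "sE y e' = e" "\<forall>u\<in>a. sE u e' = 0"
        using extend_lemma[OF inj a] by blast
      have ry: "r * y \<in> a" using r y by blast
      have pn: "p ^ n \<ge> 1" using p1 by simp
      have "r * y ^ (p ^ n) = (r * y) * y ^ (p ^ n - 1)"
        using pn by (metis mult.assoc power_eq_if not_one_le_zero)
      hence "r * y ^ (p ^ n) \<in> a" using ry ideal_mult_right[OF a] by simp
      hence r1: "fdelta (r * y ^ (p ^ n), e') \<in> tensor_rel (p ^ n) sE UNIV"
        using fs[where e=e'] e'(2) by blast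
      have r2: "fdelta (r * y ^ (p ^ n), e') - fdelta (r, sE y e') \<in> tensor_rel (p ^ n) sE UNIV"
        by (rule tensor_rel.bal) simp
      have "fdelta (r * y ^ (p ^ n), e') + - (fdelta (r * y ^ (p ^ n), e') - fdelta (r, sE y e'))
          \<in> tensor_rel (p ^ n) sE UNIV"
        using tensor_rel.add[OF r1 tensor_rel.neg[OF r2]] .
      thus "fdelta (r, e) \<in> tensor_rel (p ^ n) sE UNIV" using e'(1) by simp
    qed
  qed
  show ?thesis using rad ass by blast
qed

end
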